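(* The LCM matrix of any GCD closed set of positive integers with at most $7$ elements is invertible. Moreover, if $S$ is a GCD closed set with $8$ elements and $[S]$ is not invertible, then $(S,\mid)$ is isomorphic to the cube semilattice, i.e. the Boolean lattice of all subsets of a $3$-element set ordered by inclusion.
   Context: $S$ is GCD closed if $\gcd(x,y)\in S$ for all $x,y\in S$. The LCM matrix $[S]$ of $S=\{x_1,\dots,x_n\}$ has $(i,j)$ entry $\mathrm{lcm}(x_i,x_j)$. *)

theory Defs
  imports "Jordan_Normal_Form.Matrix"
begin

definition gcd_closed :: "nat set \<Rightarrow> bool" where
  "gcd_closed S \<longleftrightarrow> (\<forall>x\<in>S. \<forall>y\<in>S. gcd x y \<in> S)"

text \<open>LCM matrix of S = {x_1,...,x_n}, listing the elements in increasing order
  (invertibility does not depend on the ordering), with real entries.\<close>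
definition lcm_matrix :: "nat set \<Rightarrow> real mat" where
  "lcm_matrix S = (let xs = sorted_list_of_set S in
     mat (length xs) (length xs) (\<lambda>(i,j). real (lcm (xs ! i) (xs ! j))))"

end

theory Submission
  imports Defs "Jordan_Normal_Form.Determinant"
begin

function g :: "nat \<Rightarrow> real" where
  "g n = 1 / real n - (\<Sum>d\<in>{d. d dvd n \<and> d < n}. g d)"
  by auto
termination by (relation "measure id") auto
declare g.simps[simp del]

lemma g_sum: assumes "n > 0" shows "(\<Sum>d\<in>{d. d dvd n}. g d) = 1 / real n"
proof -
  have e: "{d. d dvd n} = insert n {d. d dvd n \<and> d < n}" using assms
    by (auto dest: dvd_imp_le)
  have f: "finite {d. d dvd n \<and> d < n}" by simp
  have "sum g (insert n {d. d dvd n \<and> d < n}) = g n + sum g {d. d dvd n \<and> d < n}"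
    using f by simp
  also have "\<dots> = 1 / real n" by (subst g.simps[of n]) simp
  finally show ?thesis unfolding e .
qed

definition Phi :: "nat \<Rightarrow> nat set \<Rightarrow> real" where
  "Phi x Y = (\<Sum>d\<in>{d. d dvd x \<and> (\<forall>y\<in>Y. \<not> d dvd y)}. g d)"

lemma Phi_empty: "x > 0 \<Longrightarrow> Phi x {} = 1 / real x"
  unfolding Phi_def using g_sum by simp

lemma Phi_cong:
  assumes "\<And>d. d dvd x \<Longrightarrow> (\<forall>y\<in>Y. \<not> d dvd y) = (\<forall>y\<in>Y'. \<not> d dvd y)"
  shows "Phi x Y = Phi x Y'"
  unfolding Phi_def using assms by (intro sum.cong) auto

lemma Phi_insert:
  assumes x: "x > 0" and y: "y dvd x"
  shows "Phi x (insert y Y) = Phi x Y - Phi y (gcd y ` Y)"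
proof -
  have yp: "y > 0" using x y by (auto intro: Nat.gr0I)
  let ?A = "{d. d dvd x \<and> (\<forall>z\<in>Y. \<not> d dvd z)}"
  let ?A1 = "{d. d dvd x \<and> (\<forall>z\<in>insert y Y. \<not> d dvd z)}"
  let ?A2 = "{d. d dvd y \<and> (\<forall>z\<in>gcd y ` Y. \<not> d dvd z)}"
  have fin: "finite ?A1" "finite ?A2" using x yp by auto
  have un: "?A = ?A1 \<union> ?A2" using y by (auto intro: dvd_trans)
  have dj: "?A1 \<inter> ?A2 = {}" by auto
  have "Phi x Y = sum g ?A1 + sum g ?A2"
    unfolding Phi_def un by (rule sum.union_disjoint[OF fin dj])
  then show ?thesis unfolding Phi_def by simp
qed

lemma Phi_single: "x > 0 \<Longrightarrow> y dvd x \<Longrightarrow> Phi x {y} = 1 / real x - 1 / real y"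
proof -
  assume x: "x > 0" and y: "y dvd x"
  have yp: "y > 0" using x y by (auto intro: Nat.gr0I)
  show ?thesis using Phi_insert[OF x y, of "{}"] Phi_empty[OF x] Phi_empty[OF yp] by simp
qed

lemma Phi_pair_pos:
  assumes x: "x > 0" and a: "a dvd x" and b: "b dvd x" and ab: "\<not> a dvd b" and ba: "\<not> b dvd a"
  shows "Phi x {a, b} > 0"
proof -
  have ap: "a > 0" and bp: "b > 0" using x a b by (auto intro: Nat.gr0I)
  let ?g = "gcd a b"
  have gp: "?g > 0" using ap by simp
  have e: "Phi x {a,b} = 1 / real x - 1 / real b - 1 / real a + 1 / real ?g"
    using Phi_insert[OF x a, of "{b}"] Phi_single[OF x b] Phi_single[OF ap, of "gcd a b"]
    by simp
  obtain p where p: "a = ?g * p" by (meson gcd_dvd1 dvdE)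
  obtain q where q: "b = ?g * q" by (meson gcd_dvd2 dvdE)
  have p2: "p \<ge> 2"
  proof (rule ccontr)
    assume "\<not> p \<ge> 2" then have "p = 0 \<or> p = 1" by auto
    moreover have "?g dvd b" by simp
    ultimately show False using p ap ab by (metis mult_0_right mult_1_right less_irrefl)
  qed
  have q2: "q \<ge> 2"
  proof (rule ccontr)
    assume "\<not> q \<ge> 2" then have "q = 0 \<or> q = 1" by auto
    moreover have "?g dvd a" by simp
    ultimately show False using q bp ba by (metis mult_0_right mult_1_right less_irrefl)
  qed
  have pq: "p \<noteq> q" using p q ab by auto
  have "1 / real p + 1 / real q < 1"
  proof -
    have h: "real p \<ge> 2" "real q \<ge> 2" "real p \<noteq> real q" using p2 q2 pq by auto
    have "real p \<ge> 3 \<or> real q \<ge> 3" using p2 q2 pq by auto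
    then show ?thesis
    proof
      assume "real p \<ge> 3"
      then have "1 / real p \<le> 1/3" "1 / real q \<le> 1/2" using h by (auto simp: field_simps)
      then show ?thesis by linarith
    next
      assume "real q \<ge> 3"
      then have "1 / real q \<le> 1/3" "1 / real p \<le> 1/2" using h by (auto simp: field_simps)
      then show ?thesis by linarith
    qed
  qed
  then have "(1 / real p + 1 / real q) / real ?g < 1 / real ?g"
    using gp by (simp add: divide_strict_right_mono)
  moreover have "1 / real a + 1 / real b = (1 / real p + 1 / real q) / real ?g"
  proof -
    have ra: "real a = real ?g * real p" using p by (metis of_nat_mult)
    have rb: "real b = real ?g * real q" using q by (metis of_nat_mult)
    have "real p > 0" "real q > 0" "real ?g > 0" using p2 q2 gp by auto
    then show ?thesis unfolding ra rb by (simp add: field_simps)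
  qed
  ultimately have "1 / real a + 1 / real b < 1 / real ?g" by simp
  moreover have "1 / real x > 0" using x by simp
  ultimately show ?thesis unfolding e by linarith
qed

definition antichain :: "nat set \<Rightarrow> bool" where
  "antichain Y \<longleftrightarrow> (\<forall>a\<in>Y. \<forall>b\<in>Y. a dvd b \<longrightarrow> a = b)"

definition KK :: "nat set \<Rightarrow> nat set \<Rightarrow> nat set" where
  "KK S Y = {s\<in>S. \<exists>y\<in>Y. s dvd y}"

definition peelable :: "nat set \<Rightarrow> nat \<Rightarrow> bool" where
  "peelable Y y \<longleftrightarrow> (\<exists>c\<in>gcd y ` (Y - {y}). \<forall>c'\<in>gcd y ` (Y - {y}). c' dvd c)"

lemma G_props:
  assumes "antichain Y" "y \<in> Y" "c \<in> gcd y ` (Y - {y})"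
  shows "c dvd y" "c \<noteq> y" "c \<notin> Y"
proof -
  obtain z where z: "z \<in> Y" "z \<noteq> y" "c = gcd y z" using assms(3) by auto
  show "c dvd y" using z by simp
  show cy: "c \<noteq> y" using z assms(1,2) unfolding antichain_def by (metis gcd_dvd2)
  show "c \<notin> Y" using cy \<open>c dvd y\<close> assms(1,2) unfolding antichain_def by blast
qed

lemma G_in_S:
  assumes "gcd_closed S" "Y \<subseteq> S" "y \<in> Y" "c \<in> gcd y ` (Y - {y})"
  shows "c \<in> S"
  using assms unfolding gcd_closed_def by auto

lemma peel:
  assumes x: "x > 0" and Yx: "\<forall>z\<in>Y. z dvd x" and y: "y \<in> Y" and pl: "peelable Y y"
    and ac: "antichain Y"
  shows "Phi x Y > Phi x (Y - {y})"
proof -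
  let ?G = "gcd y ` (Y - {y})"
  have yx: "y dvd x" using Yx y by auto
  have yp: "y > 0" using x yx by (auto intro: Nat.gr0I)
  have YY: "Y = insert y (Y - {y})" using y by auto
  have e1: "Phi x Y = Phi x (Y - {y}) - Phi y ?G"
    by (subst YY, rule Phi_insert[OF x yx])
  obtain c where c: "c \<in> ?G" "\<forall>c'\<in>?G. c' dvd c" using pl unfolding peelable_def by blast
  have e2: "Phi y ?G = Phi y {c}"
  proof (rule Phi_cong)
    fix d
    show "(\<forall>z\<in>?G. \<not> d dvd z) = (\<forall>z\<in>{c}. \<not> d dvd z)"
    proof
      assume "\<forall>z\<in>?G. \<not> d dvd z" then show "\<forall>z\<in>{c}. \<not> d dvd z" using c(1) by blast
    next
      assume h: "\<forall>z\<in>{c}. \<not> d dvd z"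
      show "\<forall>z\<in>?G. \<not> d dvd z"
      proof (intro ballI notI)
        fix z assume "z \<in> ?G" "d dvd z"
        then have "d dvd c" using c(2) dvd_trans by blast
        then show False using h by simp
      qed
    qed
  qed
  have cy: "c dvd y" "c \<noteq> y" using G_props[OF ac y c(1)] by auto
  have cp: "c > 0" using cy yp by (auto intro: Nat.gr0I)
  have "c < y" using cy yp by (simp add: dvd_imp_le le_neq_implies_less)
  then have "1 / real y < 1 / real c" using cp by (simp add: frac_less2)
  then show ?thesis unfolding e1 e2 Phi_single[OF yp cy(1)] by simp
qed

lemma nonpeel_pair:
  assumes fin: "finite Y" and y: "y \<in> Y" and ne: "Y - {y} \<noteq> {}" and np: "\<not> peelable Y y"
    and pos: "0 \<notin> Y"
  shows "\<exists>c1\<in>gcd y ` (Y - {y}). \<exists>c2\<in>gcd y ` (Y - {y}). \<not> c1 dvd c2 \<and> \<not> c2 dvd c1"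
proof -
  let ?G = "gcd y ` (Y - {y})"
  have fG: "finite ?G" "?G \<noteq> {}" using fin ne by auto
  define c1 where "c1 = Max ?G"
  have c1: "c1 \<in> ?G" using fG unfolding c1_def by simp
  obtain c2 where c2: "c2 \<in> ?G" "\<not> c2 dvd c1" using np c1 unfolding peelable_def by blast
  have c2p: "c2 > 0" using c2(1) pos y by auto
  have "c2 \<le> c1" using fG c2(1) unfolding c1_def by simp
  moreover have "\<not> c1 dvd c2"
  proof
    assume "c1 dvd c2" then have "c1 \<le> c2" using c2p by (simp add: dvd_imp_le)
    with \<open>c2 \<le> c1\<close> have "c1 = c2" by simp
    then show False using c2 by simp
  qed
  ultimately show ?thesis using c1 c2 by blast
qed

definition cube_cond :: "nat \<Rightarrow> nat \<Rightarrow> nat \<Rightarrow> bool" where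
  "cube_cond a b c \<longleftrightarrow> \<not> a dvd b \<and> \<not> b dvd a \<and> \<not> a dvd c \<and> \<not> c dvd a \<and> \<not> b dvd c \<and> \<not> c dvd b
     \<and> \<not> gcd a b dvd gcd a c \<and> \<not> gcd a c dvd gcd a b
     \<and> \<not> gcd a b dvd gcd b c \<and> \<not> gcd b c dvd gcd a b
     \<and> \<not> gcd a c dvd gcd b c \<and> \<not> gcd b c dvd gcd a c"

lemma cube_distinct:
  assumes "cube_cond a b c"
  shows "distinct [a, b, c, gcd a b, gcd a c, gcd b c, gcd (gcd a b) c]"
  using assms unfolding cube_cond_def
  by (auto simp: gcd.commute gcd.left_commute) (metis gcd_dvd1 gcd_dvd2 dvd_trans)+

lemma antichain_subset: "antichain Y \<Longrightarrow> Z \<subseteq> Y \<Longrightarrow> antichain Z"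
  unfolding antichain_def by blast

lemma KK_mono: "Z \<subseteq> Y \<Longrightarrow> KK S Z \<subseteq> KK S Y"
  unfolding KK_def by blast

lemma KK_sub: "KK S Y \<subseteq> S" unfolding KK_def by blast

lemma KK_I: "s \<in> S \<Longrightarrow> s dvd y \<Longrightarrow> y \<in> Y \<Longrightarrow> s \<in> KK S Y"
  unfolding KK_def by blast

lemma Y_KK: "Y \<subseteq> S \<Longrightarrow> Y \<subseteq> KK S Y"
  using KK_I[OF _ dvd_refl] by blast

lemma nonpeel3:
  assumes ac: "antichain {a,b,c}" and d: "distinct [a,b,c]"
    and np: "\<forall>y\<in>{a,b,c}. \<not> peelable {a,b,c} y"
  shows "cube_cond a b c"
proof -
  have Ga: "gcd a ` ({a,b,c} - {a}) = {gcd a b, gcd a c}" using d by auto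
  have Gb: "gcd b ` ({a,b,c} - {b}) = {gcd a b, gcd b c}" using d by (auto simp: gcd.commute)
  have Gc: "gcd c ` ({a,b,c} - {c}) = {gcd a c, gcd b c}" using d by (auto simp: gcd.commute)
  have "\<not> peelable {a,b,c} a" "\<not> peelable {a,b,c} b" "\<not> peelable {a,b,c} c" using np by auto
  then have h: "\<not> gcd a b dvd gcd a c" "\<not> gcd a c dvd gcd a b"
     "\<not> gcd a b dvd gcd b c" "\<not> gcd b c dvd gcd a b"
     "\<not> gcd a c dvd gcd b c" "\<not> gcd b c dvd gcd a c"
    unfolding peelable_def Ga Gb Gc by auto
  have "\<not> a dvd b" "\<not> b dvd a" "\<not> a dvd c" "\<not> c dvd a" "\<not> b dvd c" "\<not> c dvd b"
    using ac d unfolding antichain_def by auto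
  with h show ?thesis unfolding cube_cond_def by blast
qed

lemma cube_card:
  assumes gc: "gcd_closed S" and sub: "{a,b,c} \<subseteq> S" and cc: "cube_cond a b c" and fin: "finite S"
  shows "card (KK S {a,b,c}) \<ge> 7"
proof -
  let ?L = "[a, b, c, gcd a b, gcd a c, gcd b c, gcd (gcd a b) c]"
  have dl: "distinct ?L" by (rule cube_distinct[OF cc])
  have inS: "set ?L \<subseteq> S" using gc sub unfolding gcd_closed_def by auto
  have "set ?L \<subseteq> KK S {a,b,c}"
  proof -
    have m: "a \<in> {a,b,c}" "b \<in> {a,b,c}" "c \<in> {a,b,c}" by auto
    have "a \<in> KK S {a,b,c}" by (rule KK_I[OF _ dvd_refl m(1)]) (use inS in simp)
    moreover have "b \<in> KK S {a,b,c}" by (rule KK_I[OF _ dvd_refl m(2)]) (use inS in simp)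
    moreover have "c \<in> KK S {a,b,c}" by (rule KK_I[OF _ dvd_refl m(3)]) (use inS in simp)
    moreover have "gcd a b \<in> KK S {a,b,c}" by (rule KK_I[OF _ _ m(1)]) (use inS in simp_all)
    moreover have "gcd a c \<in> KK S {a,b,c}" by (rule KK_I[OF _ _ m(1)]) (use inS in simp_all)
    moreover have "gcd b c \<in> KK S {a,b,c}" by (rule KK_I[OF _ _ m(2)]) (use inS in simp_all)
    moreover have "gcd (gcd a b) c \<in> KK S {a,b,c}" by (rule KK_I[OF _ _ m(3)]) (use inS in simp_all)
    ultimately show ?thesis by simp
  qed
  moreover have "finite (KK S {a,b,c})" using fin KK_sub finite_subset by metis
  ultimately have "card (set ?L) \<le> card (KK S {a,b,c})" by (rule card_mono[rotated])
  moreover have "card (set ?L) = 7" using distinct_card[OF dl] by simp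
  ultimately show ?thesis by simp
qed

lemma nonpeel_big:
  assumes fin: "finite S" and gc: "gcd_closed S" and YS: "Y \<subseteq> S" and ac: "antichain Y"
    and z: "0 \<notin> S" and cY: "card Y \<ge> 4" and np: "\<forall>y\<in>Y. \<not> peelable Y y"
  shows "card (KK S Y) \<ge> 8"
proof (rule ccontr)
  assume cK: "\<not> card (KK S Y) \<ge> 8"
  have finY: "finite Y" using fin YS finite_subset by auto
  have finK: "finite (KK S Y)" using fin KK_sub finite_subset by metis
  have pos: "0 \<notin> Y" using z YS by auto
  have "Y \<noteq> {}" using cY by auto
  then obtain y where y: "y \<in> Y" by auto
  have ne: "Y - {y} \<noteq> {}"
  proof
    assume "Y - {y} = {}" then have "Y = {y}" using y by auto
    then show False using cY by simp
  qed
  obtain c1 c2 where c12: "c1 \<in> gcd y ` (Y - {y})" "c2 \<in> gcd y ` (Y - {y})"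
     "\<not> c1 dvd c2" "\<not> c2 dvd c1"
    using nonpeel_pair[OF finY y ne _ pos] np y by blast
  define c3 where "c3 = gcd c1 c2"
  have c1p: "c1 dvd y" "c1 \<notin> Y" "c1 \<in> S" using G_props[OF ac y c12(1)] G_in_S[OF gc YS y c12(1)] by auto
  have c2p: "c2 dvd y" "c2 \<notin> Y" "c2 \<in> S" using G_props[OF ac y c12(2)] G_in_S[OF gc YS y c12(2)] by auto
  have c3S: "c3 \<in> S" using gc c1p c2p unfolding gcd_closed_def c3_def by auto
  have c3y: "c3 dvd y" using c1p unfolding c3_def by (auto intro: dvd_trans)
  have c3Y: "c3 \<notin> Y"
  proof
    assume "c3 \<in> Y" then have "c3 = y" using ac y c3y unfolding antichain_def by blast
    then have "y dvd c1" unfolding c3_def by (metis gcd_dvd1)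
    then have "c1 = y" using c1p by (simp add: dvd_antisym)
    then show False using c1p y by simp
  qed
  have c3ne: "c3 \<noteq> c1" "c3 \<noteq> c2" using c12 unfolding c3_def by (metis gcd_dvd1 gcd_dvd2)+
  have c12ne: "c1 \<noteq> c2" using c12 by auto
  have subK: "Y \<union> {c1, c2, c3} \<subseteq> KK S Y"
    using Y_KK[OF YS] KK_I[OF c1p(3) c1p(1) y] KK_I[OF c2p(3) c2p(1) y] KK_I[OF c3S c3y y] by blast
  have cardU: "card (Y \<union> {c1, c2, c3}) = card Y + 3"
    using finY c1p c2p c3Y c3ne c12ne by (simp add: card_insert_if)
  have "card (Y \<union> {c1, c2, c3}) \<le> card (KK S Y)" using card_mono[OF finK subK] .
  then have c4: "card Y = 4" "card (KK S Y) = 7" using cK cY cardU by auto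
  then have Keq: "Y \<union> {c1, c2, c3} = KK S Y"
    using card_subset_eq[OF finK subK] cardU by simp
  have all: "c1 dvd y' \<and> c2 dvd y'" if y': "y' \<in> Y" for y'
  proof -
    have ne': "Y - {y'} \<noteq> {}"
    proof
      assume "Y - {y'} = {}" then have "Y = {y'}" using y' by auto
      then show False using cY by simp
    qed
    obtain d1 d2 where d12: "d1 \<in> gcd y' ` (Y - {y'})" "d2 \<in> gcd y' ` (Y - {y'})"
       "\<not> d1 dvd d2" "\<not> d2 dvd d1"
      using nonpeel_pair[OF finY y' ne' _ pos] np y' by blast
    have d1p: "d1 dvd y'" "d1 \<notin> Y" "d1 \<in> S" using G_props[OF ac y' d12(1)] G_in_S[OF gc YS y' d12(1)] by auto
    have d2p: "d2 dvd y'" "d2 \<notin> Y" "d2 \<in> S" using G_props[OF ac y' d12(2)] G_in_S[OF gc YS y' d12(2)] by auto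
    have "d1 \<in> KK S Y" "d2 \<in> KK S Y" using KK_I d1p d2p y' by auto
    then have "d1 \<in> {c1,c2,c3}" "d2 \<in> {c1,c2,c3}" using Keq d1p d2p by auto
    moreover have "c3 dvd c1" "c3 dvd c2" "c3 dvd c3" unfolding c3_def by auto
    ultimately have "d1 \<noteq> c3" "d2 \<noteq> c3" using d12(3,4) by blast+
    with \<open>d1 \<in> {c1,c2,c3}\<close> \<open>d2 \<in> {c1,c2,c3}\<close> have "d1 \<in> {c1,c2}" "d2 \<in> {c1,c2}" "d1 \<noteq> d2"
      using d12(3) by auto
    then have "(d1 = c1 \<and> d2 = c2) \<or> (d1 = c2 \<and> d2 = c1)" by blast
    then show ?thesis using d1p d2p by blast
  qed
  obtain z where zz: "z \<in> Y" "z \<noteq> y" using ne by auto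
  have wG: "gcd y z \<in> gcd y ` (Y - {y})" using zz by auto
  have wp: "gcd y z \<notin> Y" "gcd y z \<in> S" using G_props[OF ac y wG] G_in_S[OF gc YS y wG] by auto
  have "gcd y z \<in> KK S Y" using wp y KK_I[of "gcd y z" S y Y] by auto
  then have w3: "gcd y z \<in> {c1, c2, c3}" using Keq wp by auto
  have "c1 dvd gcd y z" "c2 dvd gcd y z" using all[OF y] all[OF zz(1)] by auto
  moreover have "c3 dvd c2" unfolding c3_def by simp
  ultimately show False using w3 c12(3,4) by (metis dvd_trans empty_iff insert_iff)
qed

lemma pos:
  assumes fin: "finite S" and gc: "gcd_closed S" and z: "0 \<notin> S" and x: "x > 0"
  shows "Y \<subseteq> S \<Longrightarrow> antichain Y \<Longrightarrow> \<forall>y\<in>Y. y dvd x \<Longrightarrow> card Y \<ge> 2 \<Longrightarrow> card (KK S Y) \<le> 6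
     \<Longrightarrow> Phi x Y > 0"
proof (induction "card Y" arbitrary: Y rule: less_induct)
  case less
  have finY: "finite Y" using fin less.prems(1) finite_subset by auto
  have finK: "finite (KK S Y)" using fin KK_sub finite_subset by metis
  show ?case
  proof (cases "card Y = 2")
    case True
    then obtain a b where ab: "Y = {a,b}" "a \<noteq> b" by (meson card_2_iff)
    have "\<not> a dvd b" "\<not> b dvd a" using less.prems(2) ab unfolding antichain_def by auto
    then show ?thesis using Phi_pair_pos[OF x] less.prems(3) ab by auto
  next
    case False
    then have c3: "card Y \<ge> 3" using less.prems(4) by simp
    have "\<exists>y\<in>Y. peelable Y y"
    proof (rule ccontr)
      assume np: "\<not> (\<exists>y\<in>Y. peelable Y y)"
      show False
      proof (cases "card Y \<ge> 4")
        case True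
        then show False using nonpeel_big[OF fin gc less.prems(1,2) z] np less.prems(5) by auto
      next
        case False
        then have "card Y = 3" using c3 by simp
        then obtain a b c where abc: "Y = {a,b,c}" "distinct [a,b,c]"
          by (metis card_3_iff distinct_length_2_or_more distinct_singleton)
        have "cube_cond a b c" using nonpeel3[of a b c] abc np less.prems(2) by auto
        then have "card (KK S Y) \<ge> 7" using cube_card[OF gc _ _ fin] abc less.prems(1) by auto
        then show False using less.prems(5) by simp
      qed
    qed
    then obtain y where y: "y \<in> Y" "peelable Y y" by blast
    have lt: "Phi x (Y - {y}) < Phi x Y"
      using peel[OF x less.prems(3) y(1) y(2) less.prems(2)] .
    have cY': "card (Y - {y}) = card Y - 1" using y finY by simp
    have "Phi x (Y - {y}) > 0"
    proof (rule less.hyps)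
      show "card (Y - {y}) < card Y" using cY' c3 by simp
      show "Y - {y} \<subseteq> S" using less.prems(1) by auto
      show "antichain (Y - {y})" using antichain_subset[OF less.prems(2)] by auto
      show "\<forall>y\<in>Y - {y}. y dvd x" using less.prems(3) by auto
      show "2 \<le> card (Y - {y})" using cY' c3 by simp
      have "card (KK S (Y - {y})) \<le> card (KK S Y)"
        by (rule card_mono[OF finK KK_mono]) auto
      then show "card (KK S (Y - {y})) \<le> 6" using less.prems(5) by simp
    qed
    then show ?thesis using lt by simp
  qed
qed

lemma Gcd_anti: "A \<subseteq> B \<Longrightarrow> Gcd B dvd (Gcd A :: nat)"
  by (rule Gcd_greatest) (auto intro: Gcd_dvd)

lemma iso:
  assumes fin: "finite S" and gc: "gcd_closed S" and c8: "card S = 8" and xS: "x \<in> S"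
    and abc: "{a,b,c} \<subseteq> S" and dx: "a dvd x" "b dvd x" "c dvd x"
    and nx: "a \<noteq> x" "b \<noteq> x" "c \<noteq> x" and cc: "cube_cond a b c"
  shows "\<exists>f. bij_betw f S (Pow {0::nat, 1, 2}) \<and> (\<forall>u\<in>S. \<forall>v\<in>S. u dvd v \<longleftrightarrow> f u \<subseteq> f v)"
proof -
  define yy :: "nat \<Rightarrow> nat" where "yy i = (if i = 0 then a else if i = 1 then b else c)" for i
  define h where "h T = Gcd (insert x (yy ` T))" for T
  let ?P = "Pow {0::nat, 1, 2}"
  let ?L = "[x, a, b, c, gcd a b, gcd a c, gcd b c, gcd (gcd a b) c]"
  have xnd: "\<not> x dvd a" "\<not> x dvd b" "\<not> x dvd c" using dx nx by (auto dest: dvd_antisym)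
  have dl7: "distinct [a, b, c, gcd a b, gcd a c, gcd b c, gcd (gcd a b) c]"
    by (rule cube_distinct[OF cc])
  have xn: "x \<notin> set [a, b, c, gcd a b, gcd a c, gcd b c, gcd (gcd a b) c]"
  proof -
    have "gcd a b dvd a" "gcd a c dvd a" "gcd b c dvd b" "gcd (gcd a b) c dvd a" by (auto intro: dvd_trans)
    then have "x \<noteq> gcd a b" "x \<noteq> gcd a c" "x \<noteq> gcd b c" "x \<noteq> gcd (gcd a b) c"
      using xnd by auto
    then show ?thesis using xnd by auto
  qed
  have dl: "distinct ?L" using dl7 xn by simp
  have g1: "gcd x a = a" "gcd x b = b" "gcd x c = c" using dx by auto
  have g2: "gcd x (gcd a b) = gcd a b" "gcd x (gcd a c) = gcd a c" "gcd x (gcd b c) = gcd b c"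
    "gcd x (gcd a (gcd b c)) = gcd (gcd a b) c"
  proof -
    have "gcd a b dvd x" "gcd a c dvd x" "gcd b c dvd x" "gcd a (gcd b c) dvd x"
      using dx by (meson dvd_trans gcd_dvd1 gcd_dvd2)+
    then show "gcd x (gcd a b) = gcd a b" "gcd x (gcd a c) = gcd a c" "gcd x (gcd b c) = gcd b c"
      "gcd x (gcd a (gcd b c)) = gcd (gcd a b) c" by (simp_all add: gcd.assoc)
  qed
  have Pw: "?P = {{}, {0}, {1}, {2}, {0,1}, {0,2}, {1,2}, {0,1,2}}"
    by (simp add: Pow_insert insert_commute)
  have hv: "h {} = x" "h {0} = a" "h {1} = b" "h {2} = c" "h {0,1} = gcd a b" "h {0,2} = gcd a c"
    "h {1,2} = gcd b c" "h {0,1,2} = gcd (gcd a b) c"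
    unfolding h_def yy_def using g1 g2 by (simp_all add: ac_simps)
  have img: "h ` ?P = set ?L" unfolding Pw using hv by simp
  have finP: "finite ?P" by simp
  have cP: "card ?P = 8" by (simp add: card_Pow)
  have chP: "card (h ` ?P) = 8" unfolding img using distinct_card[OF dl] by simp
  have inj: "inj_on h ?P" by (rule eq_card_imp_inj_on[OF finP]) (simp only: chP cP)
  have LS: "set ?L \<subseteq> S" using gc abc xS unfolding gcd_closed_def by auto
  have hS: "h ` ?P = S"
    by (rule card_subset_eq[OF fin]) (use img LS chP c8 in auto)
  have hdvd: "h T dvd yy i \<longleftrightarrow> i \<in> T" if T: "T \<in> ?P" and i: "i \<in> {0,1,2}" for T i
  proof
    assume "i \<in> T" then have "yy i \<in> insert x (yy ` T)" by blast
    then show "h T dvd yy i" unfolding h_def by (rule Gcd_dvd)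
  next
    assume d: "h T dvd yy i"
    have "h (insert i T) = gcd (yy i) (h T)" unfolding h_def by (simp add: gcd.left_commute)
    also have "\<dots> = h T" using d by simp
    finally have "h (insert i T) = h T" .
    moreover have "insert i T \<in> ?P" using T i by auto
    ultimately have "insert i T = T" using inj T by (meson inj_onD)
    then show "i \<in> T" by auto
  qed
  define f where "f s = {i \<in> {0::nat,1,2}. \<not> s dvd yy i}" for s
  have fh: "f (h T) = {0,1,2} - T" if T: "T \<in> ?P" for T
    unfolding f_def using hdvd[OF T] by auto
  have ord: "h T dvd h U \<longleftrightarrow> U \<subseteq> T" if T: "T \<in> ?P" and U: "U \<in> ?P" for T U
  proof
    assume d: "h T dvd h U"
    show "U \<subseteq> T"
    proof
      fix i assume iU: "i \<in> U"
      have i: "i \<in> {0,1,2}" using iU U by auto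
      have "h U dvd yy i" using hdvd[OF U i] iU by simp
      then have "h T dvd yy i" using d dvd_trans by blast
      then show "i \<in> T" using hdvd[OF T i] by simp
    qed
  next
    assume "U \<subseteq> T"
    then show "h T dvd h U" unfolding h_def by (intro Gcd_anti) auto
  qed
  have bij: "bij_betw f S ?P"
  proof (rule bij_betw_imageI)
    show "inj_on f S"
    proof (rule inj_onI)
      fix u v assume u: "u \<in> S" and v: "v \<in> S" and e: "f u = f v"
      obtain T where T: "T \<in> ?P" "u = h T" using u hS by blast
      obtain U where U: "U \<in> ?P" "v = h U" using v hS by blast
      have "{0,1,2} - T = {0,1,2} - U" using e fh T U by simp
      then have "T = U" using T(1) U(1) by blast
      then show "u = v" using T U by simp
    qed
    show "f ` S = ?P"
    proof
      show "f ` S \<subseteq> ?P" unfolding f_def by auto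
      show "?P \<subseteq> f ` S"
      proof
        fix U assume U: "U \<in> ?P"
        have C: "{0,1,2} - U \<in> ?P" by auto
        have "f (h ({0,1,2} - U)) = U" using fh[OF C] U by auto
        moreover have "h ({0,1,2} - U) \<in> S" using hS C by blast
        ultimately show "U \<in> f ` S" by (metis image_eqI)
      qed
    qed
  qed
  have "\<forall>u\<in>S. \<forall>v\<in>S. u dvd v \<longleftrightarrow> f u \<subseteq> f v"
  proof (intro ballI)
    fix u v assume u: "u \<in> S" and v: "v \<in> S"
    obtain T where T: "T \<in> ?P" "u = h T" using u hS by blast
    obtain U where U: "U \<in> ?P" "v = h U" using v hS by blast
    have "u dvd v \<longleftrightarrow> U \<subseteq> T" using ord[OF T(1) U(1)] T U by simp
    also have "\<dots> \<longleftrightarrow> {0,1,2} - T \<subseteq> {0,1,2} - U" using T(1) U(1) by blast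
    also have "\<dots> \<longleftrightarrow> f u \<subseteq> f v" using fh T U by simp
    finally show "u dvd v \<longleftrightarrow> f u \<subseteq> f v" .
  qed
  with bij show ?thesis by blast
qed

definition Psi :: "nat set \<Rightarrow> nat \<Rightarrow> real" where
  "Psi S x = Phi x {y\<in>S. y dvd x \<and> y \<noteq> x}"

lemma max_above:
  fixes P :: "nat set"
  assumes fin: "finite P" and y: "y \<in> P" and pos: "0 \<notin> P"
  shows "\<exists>y'\<in>P. y dvd y' \<and> (\<forall>z\<in>P. y' dvd z \<longrightarrow> y' = z)"
proof -
  let ?Q = "{z\<in>P. y dvd z}"
  have yQ: "y \<in> ?Q" using y dvd_refl by simp
  have fQ: "finite ?Q" "?Q \<noteq> {}" using fin yQ by auto
  define m where "m = Max ?Q"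
  have m: "m \<in> ?Q" using fQ unfolding m_def by (rule Max_in)
  have "\<forall>z\<in>P. m dvd z \<longrightarrow> m = z"
  proof (intro ballI impI)
    fix z assume z: "z \<in> P" "m dvd z"
    then have "y dvd z" using m dvd_trans by auto
    then have "z \<in> ?Q" using z by simp
    then have "z \<le> m" using fQ unfolding m_def by simp
    moreover have "z > 0" using z pos by (auto intro: Nat.gr0I)
    then have "m \<le> z" using z by (simp add: dvd_imp_le)
    ultimately show "m = z" by simp
  qed
  then show ?thesis using m by blast
qed

lemma key:
  assumes fin: "finite S" and gc: "gcd_closed S" and z: "0 \<notin> S" and cS: "card S \<le> 8"
    and xS: "x \<in> S" and ps: "Psi S x = 0"
  shows "\<exists>a b c. {a,b,c} \<subseteq> S \<and> a dvd x \<and> b dvd x \<and> c dvd x \<and> a \<noteq> x \<and> b \<noteq> x \<and> c \<noteq> x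
     \<and> cube_cond a b c"
proof -
  have x: "x > 0" using xS z by (auto intro: Nat.gr0I)
  define P where "P = {y\<in>S. y dvd x \<and> y \<noteq> x}"
  define Y where "Y = {y\<in>P. \<forall>z\<in>P. y dvd z \<longrightarrow> y = z}"
  have finP: "finite P" using fin unfolding P_def by simp
  have P0: "0 \<notin> P" using z unfolding P_def by auto
  have YP: "Y \<subseteq> P" unfolding Y_def by auto
  have finY: "finite Y" using finP YP finite_subset by auto
  have YS: "Y \<subseteq> S" using YP unfolding P_def by auto
  have above: "\<exists>y'\<in>Y. y dvd y'" if "y \<in> P" for y
    using max_above[OF finP that P0] unfolding Y_def by blast
  have e: "Psi S x = Phi x Y"
    unfolding Psi_def P_def[symmetric]
  proof (rule Phi_cong)
    fix d
    show "(\<forall>y\<in>P. \<not> d dvd y) = (\<forall>y\<in>Y. \<not> d dvd y)"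
    proof
      assume "\<forall>y\<in>P. \<not> d dvd y" then show "\<forall>y\<in>Y. \<not> d dvd y" using YP by blast
    next
      assume h: "\<forall>y\<in>Y. \<not> d dvd y"
      show "\<forall>y\<in>P. \<not> d dvd y"
      proof (intro ballI notI)
        fix y assume "y \<in> P" "d dvd y"
        then obtain y' where "y' \<in> Y" "y dvd y'" using above by blast
        then show False using h \<open>d dvd y\<close> dvd_trans by metis
      qed
    qed
  qed
  have ac: "antichain Y" unfolding antichain_def Y_def by blast
  have Ydx: "\<forall>y\<in>Y. y dvd x" using YP unfolding P_def by auto
  have Ynx: "\<forall>y\<in>Y. y \<noteq> x" using YP unfolding P_def by auto
  have KP: "KK S Y = P"
  proof
    show "KK S Y \<subseteq> P"
    proof
      fix s assume "s \<in> KK S Y"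
      then obtain y where s: "s \<in> S" "y \<in> Y" "s dvd y" unfolding KK_def by blast
      have "s dvd x" using s Ydx dvd_trans by metis
      moreover have "s \<noteq> x"
      proof
        assume "s = x" then have "x dvd y" using s by simp
        then have "y = x" using Ydx s(2) by (simp add: dvd_antisym)
        then show False using Ynx s(2) by simp
      qed
      ultimately show "s \<in> P" unfolding P_def using s by simp
    qed
    show "P \<subseteq> KK S Y"
    proof
      fix s assume s: "s \<in> P"
      then obtain y' where "y' \<in> Y" "s dvd y'" using above by blast
      then show "s \<in> KK S Y" using s KK_I[of s S y' Y] unfolding P_def by auto
    qed
  qed
  have cP: "card P \<le> 7"
  proof -
    have "P \<subseteq> S - {x}" unfolding P_def by auto
    then have "card P \<le> card (S - {x})" using fin by (intro card_mono) auto
    then show ?thesis using cS xS fin by simp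
  qed
  show ?thesis
  proof (cases "card Y \<le> 1")
    case True
    then have "Y = {} \<or> (\<exists>y. Y = {y})" using finY by (metis card_0_eq le_SucE One_nat_def card_1_singletonE le_zero_eq)
    then show ?thesis
    proof
      assume "Y = {}"
      then have "Psi S x = 1 / real x" using e Phi_empty[OF x] by simp
      then show ?thesis using ps x by simp
    next
      assume "\<exists>y. Y = {y}"
      then obtain y where y: "Y = {y}" by blast
      have yd: "y dvd x" "y \<noteq> x" using Ydx Ynx y by auto
      have "y > 0" using yd x by (auto intro: Nat.gr0I)
      moreover have "y < x" using yd x by (simp add: dvd_imp_le le_neq_implies_less)
      ultimately have "1 / real x < 1 / real y" by (simp add: frac_less2)
      then have "Psi S x < 0" using e Phi_single[OF x yd(1)] y by simp
      then show ?thesis using ps by simp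
    qed
  next
    case False
    then have c2: "card Y \<ge> 2" by simp
    show ?thesis
    proof (cases "\<exists>y\<in>Y. peelable Y y")
      case True
      then obtain y where y: "y \<in> Y" "peelable Y y" by blast
      have lt: "Phi x (Y - {y}) < Phi x Y" using peel[OF x Ydx y ac] .
      have cY': "card (Y - {y}) = card Y - 1" using y finY by simp
      show ?thesis
      proof (cases "card Y = 2")
        case True
        then obtain a b where ab: "Y = {a,b}" "a \<noteq> b" by (meson card_2_iff)
        have "\<not> a dvd b" "\<not> b dvd a" using ac ab unfolding antichain_def by auto
        then have "Phi x Y > 0" using Phi_pair_pos[OF x] Ydx ab by auto
        then show ?thesis using ps e by simp
      next
        case False
        have "Phi x (Y - {y}) > 0"
        proof (rule pos[OF fin gc z x])
          show "Y - {y} \<subseteq> S" using YS by auto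
          show "antichain (Y - {y})" using antichain_subset[OF ac] by auto
          show "\<forall>y\<in>Y - {y}. y dvd x" using Ydx by auto
          show "2 \<le> card (Y - {y})" using cY' c2 False by simp
          have sub: "KK S (Y - {y}) \<subseteq> P - {y}"
          proof -
            have "KK S (Y - {y}) \<subseteq> KK S Y" by (rule KK_mono) auto
            moreover have "y \<notin> KK S (Y - {y})"
            proof
              assume "y \<in> KK S (Y - {y})"
              then obtain y' where "y' \<in> Y - {y}" "y dvd y'" unfolding KK_def by blast
              then show False using ac y(1) unfolding antichain_def by blast
            qed
            ultimately show ?thesis using KP by blast
          qed
          have "card (KK S (Y - {y})) \<le> card (P - {y})" by (rule card_mono[OF _ sub]) (use finP in simp)
          moreover have "y \<in> P" using y YP by blast
          then have "card (P - {y}) = card P - 1" using finP by simp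
          ultimately show "card (KK S (Y - {y})) \<le> 6" using cP by simp
        qed
        then show ?thesis using lt ps e by simp
      qed
    next
      case False
      then have np: "\<forall>y\<in>Y. \<not> peelable Y y" by blast
      show ?thesis
      proof (cases "card Y \<ge> 3")
        case False
        then have "card Y = 2" using c2 by simp
        then obtain a b where ab: "Y = {a,b}" "a \<noteq> b" by (meson card_2_iff)
        have "\<not> a dvd b" "\<not> b dvd a" using ac ab unfolding antichain_def by auto
        then have "Phi x Y > 0" using Phi_pair_pos[OF x] Ydx ab by auto
        then show ?thesis using ps e by simp
      next
        case True
        show ?thesis
        proof (cases "card Y \<ge> 4")
          case True
          then have "card (KK S Y) \<ge> 8" using nonpeel_big[OF fin gc YS ac z] np by auto
          then show ?thesis using KP cP by simp
        next
          case False
          then have "card Y = 3" using True by simp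
          then obtain a b c where abc: "Y = {a,b,c}" "distinct [a,b,c]"
            by (metis card_3_iff distinct_length_2_or_more distinct_singleton)
          have "cube_cond a b c" using nonpeel3[of a b c] abc np ac by auto
          then show ?thesis using abc YS Ydx Ynx by auto
        qed
      qed
    qed
  qed
qed

lemma psi_sum:
  assumes fin: "finite S" and gc: "gcd_closed S" and z: "0 \<notin> S" and aS: "a \<in> S"
  shows "(\<Sum>w\<in>{w\<in>S. w dvd a}. Psi S w) = 1 / real a"
proof -
  have a: "a > 0" using aS z by (auto intro: Nat.gr0I)
  define C where "C w = {d. d dvd w \<and> (\<forall>y\<in>{y\<in>S. y dvd w \<and> y \<noteq> w}. \<not> d dvd y)}" for w
  let ?Z = "{w\<in>S. w dvd a}"
  have PsiC: "Psi S w = sum g (C w)" for w unfolding Psi_def Phi_def C_def by simp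
  have finZ: "finite ?Z" using fin by simp
  have finC: "finite (C w)" if "w \<in> ?Z" for w
  proof -
    have "w > 0" using that z by (auto intro: Nat.gr0I)
    then show ?thesis unfolding C_def by simp
  qed
  have disj: "C v \<inter> C w = {}" if "v \<in> ?Z" "w \<in> ?Z" "v \<noteq> w" for v w
  proof (rule ccontr)
    assume "C v \<inter> C w \<noteq> {}"
    then obtain d where dv: "d \<in> C v" and dw: "d \<in> C w" by blast
    have gS: "gcd v w \<in> S" using gc that unfolding gcd_closed_def by auto
    have dg: "d dvd gcd v w" using dv dw unfolding C_def by simp
    have "gcd v w = v"
    proof (rule ccontr)
      assume "gcd v w \<noteq> v"
      then show False using dv dg gS unfolding C_def by auto
    qed
    moreover have "gcd v w = w"
    proof (rule ccontr)
      assume "gcd v w \<noteq> w"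
      then show False using dw dg gS unfolding C_def by auto
    qed
    ultimately show False using that by simp
  qed
  have cover: "{d. d dvd a} = (\<Union>w\<in>?Z. C w)"
  proof
    show "(\<Union>w\<in>?Z. C w) \<subseteq> {d. d dvd a}" unfolding C_def by (auto intro: dvd_trans)
    show "{d. d dvd a} \<subseteq> (\<Union>w\<in>?Z. C w)"
    proof
      fix d assume "d \<in> {d. d dvd a}"
      then have da: "d dvd a" by simp
      let ?Q = "{s\<in>S. d dvd s \<and> s dvd a}"
      have aQ: "a \<in> ?Q" using aS da by simp
      have fQ: "finite ?Q" "?Q \<noteq> {}" using fin aQ by auto
      define m where "m = Min ?Q"
      have m: "m \<in> ?Q" using fQ unfolding m_def by (rule Min_in)
      have "d \<in> C m"
        unfolding C_def
      proof (intro CollectI conjI ballI notI)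
        show "d dvd m" using m by simp
        fix y assume y: "y \<in> {y\<in>S. y dvd m \<and> y \<noteq> m}" and dy: "d dvd y"
        have "y dvd a" using y m dvd_trans by auto
        then have "y \<in> ?Q" using y dy by simp
        then have "m \<le> y" using fQ unfolding m_def by simp
        moreover have "m > 0" using m z by (auto intro: Nat.gr0I)
        then have "y \<le> m" using y by (simp add: dvd_imp_le)
        ultimately show False using y by simp
      qed
      then show "d \<in> (\<Union>w\<in>?Z. C w)" using m by auto
    qed
  qed
  have "1 / real a = sum g {d. d dvd a}" using g_sum[OF a] by simp
  also have "\<dots> = (\<Sum>w\<in>?Z. sum g (C w))"
    unfolding cover by (rule sum.UNION_disjoint[OF finZ]) (use finC disj in auto)
  finally show ?thesis unfolding PsiC by simp
qed

lemma lcm_expand: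
  assumes fin: "finite S" and gc: "gcd_closed S" and z: "0 \<notin> S" and aS: "a \<in> S" and bS: "b \<in> S"
  shows "real (lcm a b) = real a * real b * (\<Sum>w\<in>S. if w dvd a \<and> w dvd b then Psi S w else 0)"
proof -
  have gS: "gcd a b \<in> S" using gc aS bS unfolding gcd_closed_def by auto
  have gp: "gcd a b > 0" using gS z by (auto intro: Nat.gr0I)
  have "(\<Sum>w\<in>S. if w dvd a \<and> w dvd b then Psi S w else 0) = (\<Sum>w\<in>{w\<in>S. w dvd gcd a b}. Psi S w)"
    by (simp add: sum.inter_filter[OF fin, symmetric])
  also have "\<dots> = 1 / real (gcd a b)" by (rule psi_sum[OF fin gc z gS])
  finally have e: "(\<Sum>w\<in>S. if w dvd a \<and> w dvd b then Psi S w else 0) = 1 / real (gcd a b)" .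
  have "real (gcd a b) * real (lcm a b) = real a * real b"
    by (metis of_nat_mult prod_gcd_lcm_nat)
  then show ?thesis unfolding e using gp by (simp add: field_simps)
qed

lemma det_ne0_invertible:
  fixes A :: "real mat"
  assumes A: "A \<in> carrier_mat n n" and d: "det A \<noteq> 0"
  shows "invertible_mat A"
proof -
  have "A \<in> Units (ring_mat TYPE(real) n n)" by (rule det_non_zero_imp_unit[OF A d])
  then obtain B where B: "B \<in> carrier_mat n n" "B * A = 1\<^sub>m n" "A * B = 1\<^sub>m n"
    unfolding Units_def ring_mat_def by auto
  show ?thesis unfolding invertible_mat_def inverts_mat_def square_mat.simps
    using A B by auto
qed

lemma sum_nth_set:
  assumes "distinct xs"
  shows "(\<Sum>k<length xs. f (xs ! k)) = (\<Sum>w\<in>set xs. f w)"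
proof -
  have "set xs = (!) xs ` {..<length xs}" by (auto simp: set_conv_nth)
  moreover have "inj_on ((!) xs) {..<length xs}" using assms by (simp add: inj_on_nth)
  ultimately show ?thesis by (simp add: sum.reindex)
qed

lemma lcm_invertible:
  assumes fin: "finite S" and gc: "gcd_closed S" and z: "0 \<notin> S"
    and nz: "\<forall>x\<in>S. Psi S x \<noteq> 0"
  shows "invertible_mat (lcm_matrix S)"
proof -
  define xs where "xs = sorted_list_of_set S"
  define n where "n = length xs"
  have sx: "set xs = S" "distinct xs" "sorted xs" using fin unfolding xs_def by auto
  have inS: "xs ! i \<in> S" if "i < n" for i using that sx unfolding n_def by auto
  have posx: "xs ! i > 0" if "i < n" for i using inS[OF that] z by (auto intro: Nat.gr0I)
  have low: "\<not> xs ! k dvd xs ! i" if "i < k" "k < n" for i k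
  proof
    assume d: "xs ! k dvd xs ! i"
    have "xs ! i \<le> xs ! k" using sx(3) that unfolding n_def by (simp add: sorted_nth_mono)
    moreover have "xs ! i \<noteq> xs ! k" using sx(2) that unfolding n_def by (simp add: nth_eq_iff_index_eq)
    moreover have "xs ! k \<le> xs ! i" using d posx[of i] that by (simp add: dvd_imp_le)
    ultimately show False by simp
  qed
  define E where "E = mat n n (\<lambda>(i,k). if xs ! k dvd xs ! i then real (xs ! i) else 0)"
  define F where "F = mat n n (\<lambda>(i,k). (if xs ! k dvd xs ! i then real (xs ! i) else 0) * Psi S (xs ! k))"
  have E: "E \<in> carrier_mat n n" and F: "F \<in> carrier_mat n n" unfolding E_def F_def by auto
  have M: "lcm_matrix S = F * transpose_mat E"
  proof (rule eq_matI)
    show "dim_row (lcm_matrix S) = dim_row (F * transpose_mat E)"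
      unfolding lcm_matrix_def Let_def xs_def[symmetric] n_def[symmetric] F_def by simp
    show "dim_col (lcm_matrix S) = dim_col (F * transpose_mat E)"
      unfolding lcm_matrix_def Let_def xs_def[symmetric] n_def[symmetric] E_def by simp
    fix i j assume i: "i < dim_row (F * transpose_mat E)" and j: "j < dim_col (F * transpose_mat E)"
    then have i: "i < n" and j: "j < n" unfolding F_def E_def by auto
    have "(F * transpose_mat E) $$ (i, j) = (\<Sum>k<n. F $$ (i,k) * E $$ (j,k))"
      using i j F E by (simp add: scalar_prod_def lessThan_atLeast0)
    also have "\<dots> = (\<Sum>k<n. real (xs ! i) * real (xs ! j) *
        (if xs ! k dvd xs ! i \<and> xs ! k dvd xs ! j then Psi S (xs ! k) else 0))"
      by (rule sum.cong) (auto simp: F_def E_def i j)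
    also have "\<dots> = real (xs ! i) * real (xs ! j) *
        (\<Sum>k<n. (if xs ! k dvd xs ! i \<and> xs ! k dvd xs ! j then Psi S (xs ! k) else 0))"
      by (simp add: sum_distrib_left)
    also have "\<dots> = real (xs ! i) * real (xs ! j) *
        (\<Sum>w\<in>S. (if w dvd xs ! i \<and> w dvd xs ! j then Psi S w else 0))"
      using sum_nth_set[OF sx(2), of "\<lambda>w. if w dvd xs ! i \<and> w dvd xs ! j then Psi S w else 0"]
      unfolding n_def sx(1) by simp
    also have "\<dots> = real (lcm (xs ! i) (xs ! j))"
      using lcm_expand[OF fin gc z inS[OF i] inS[OF j]] by simp
    also have "\<dots> = lcm_matrix S $$ (i, j)"
      unfolding lcm_matrix_def Let_def xs_def[symmetric] n_def[symmetric] using i j by simp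
    finally show "lcm_matrix S $$ (i, j) = (F * transpose_mat E) $$ (i, j)" by simp
  qed
  have dE: "det E = prod_list (diag_mat E)"
    by (rule det_lower_triangular[OF _ E]) (auto simp: E_def low)
  have dF: "det F = prod_list (diag_mat F)"
    by (rule det_lower_triangular[OF _ F]) (auto simp: F_def low)
  have "0 \<notin> set (diag_mat E)"
  proof
    assume "0 \<in> set (diag_mat E)"
    then obtain i where i: "i < n" "E $$ (i,i) = 0" unfolding diag_mat_def using E by auto
    then show False using posx[OF i(1)] unfolding E_def by simp
  qed
  then have nE: "det E \<noteq> 0" unfolding dE by (simp add: prod_list_zero_iff)
  have "0 \<notin> set (diag_mat F)"
  proof
    assume "0 \<in> set (diag_mat F)"
    then obtain i where i: "i < n" "F $$ (i,i) = 0" unfolding diag_mat_def using F by auto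
    then show False using posx[OF i(1)] nz inS[OF i(1)] unfolding F_def by simp
  qed
  then have nF: "det F \<noteq> 0" unfolding dF by (simp add: prod_list_zero_iff)
  have "det (lcm_matrix S) = det F * det (transpose_mat E)"
    unfolding M by (rule det_mult[OF F]) (use E in simp)
  also have "\<dots> = det F * det E" using det_transpose[OF E] by simp
  finally have "det (lcm_matrix S) \<noteq> 0" using nE nF by simp
  moreover have "lcm_matrix S \<in> carrier_mat n n" using M F E by simp
  ultimately show ?thesis by (rule det_ne0_invertible[rotated])
qed

lemma card8:
  assumes fin: "finite S" and gc: "gcd_closed S" and xS: "x \<in> S"
    and abc: "{a,b,c} \<subseteq> S" and dx: "a dvd x" "b dvd x" "c dvd x"
    and nx: "a \<noteq> x" "b \<noteq> x" "c \<noteq> x" and cc: "cube_cond a b c"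
  shows "card S \<ge> 8"
proof -
  let ?L = "[x, a, b, c, gcd a b, gcd a c, gcd b c, gcd (gcd a b) c]"
  have xnd: "\<not> x dvd a" "\<not> x dvd b" "\<not> x dvd c" using dx nx by (auto dest: dvd_antisym)
  have dl7: "distinct [a, b, c, gcd a b, gcd a c, gcd b c, gcd (gcd a b) c]"
    by (rule cube_distinct[OF cc])
  have xn: "x \<notin> set [a, b, c, gcd a b, gcd a c, gcd b c, gcd (gcd a b) c]"
  proof -
    have "gcd a b dvd a" "gcd a c dvd a" "gcd b c dvd b" "gcd (gcd a b) c dvd a" by (auto intro: dvd_trans)
    then have "x \<noteq> gcd a b" "x \<noteq> gcd a c" "x \<noteq> gcd b c" "x \<noteq> gcd (gcd a b) c"
      using xnd by auto
    then show ?thesis using xnd by auto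
  qed
  have dl: "distinct ?L" using dl7 xn by simp
  have LS: "set ?L \<subseteq> S" using gc abc xS unfolding gcd_closed_def by auto
  have "card (set ?L) \<le> card S" by (rule card_mono[OF fin LS])
  then show ?thesis using distinct_card[OF dl] by simp
qed

theorem theorem4p4:
  shows "(\<forall>S. finite S \<and> (\<forall>x\<in>S. x > 0) \<and> gcd_closed S \<and> card S \<le> 7
            \<longrightarrow> invertible_mat (lcm_matrix S))
       \<and> (\<forall>S. finite S \<and> (\<forall>x\<in>S. x > 0) \<and> gcd_closed S \<and> card S = 8
            \<and> \<not> invertible_mat (lcm_matrix S)
            \<longrightarrow> (\<exists>f. bij_betw f S (Pow {0::nat, 1, 2}) \<and>
                    (\<forall>x\<in>S. \<forall>y\<in>S. x dvd y \<longleftrightarrow> f x \<subseteq> f y)))"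
proof (intro conjI allI impI)
  fix S :: "nat set"
  assume h: "finite S \<and> (\<forall>x\<in>S. x > 0) \<and> gcd_closed S \<and> card S \<le> 7"
  then have fin: "finite S" and z: "0 \<notin> S" and gc: "gcd_closed S" and c7: "card S \<le> 7" by auto
  have "\<forall>x\<in>S. Psi S x \<noteq> 0"
  proof (intro ballI notI)
    fix x assume xS: "x \<in> S" and p: "Psi S x = 0"
    obtain a b c where abc: "{a,b,c} \<subseteq> S" "a dvd x" "b dvd x" "c dvd x" "a \<noteq> x" "b \<noteq> x" "c \<noteq> x"
        "cube_cond a b c"
      using key[OF fin gc z _ xS p] c7 by fastforce
    have "card S \<ge> 8" by (rule card8[OF fin gc xS abc])
    then show False using c7 by simp
  qed
  then show "invertible_mat (lcm_matrix S)" by (rule lcm_invertible[OF fin gc z])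
next
  fix S :: "nat set"
  assume h: "finite S \<and> (\<forall>x\<in>S. x > 0) \<and> gcd_closed S \<and> card S = 8 \<and> \<not> invertible_mat (lcm_matrix S)"
  then have fin: "finite S" and z: "0 \<notin> S" and gc: "gcd_closed S" and c8: "card S = 8"
    and ni: "\<not> invertible_mat (lcm_matrix S)" by auto
  have "\<exists>x\<in>S. Psi S x = 0" using lcm_invertible[OF fin gc z] ni by blast
  then obtain x where xS: "x \<in> S" and p: "Psi S x = 0" by blast
  obtain a b c where abc: "{a,b,c} \<subseteq> S" "a dvd x" "b dvd x" "c dvd x" "a \<noteq> x" "b \<noteq> x" "c \<noteq> x"
      "cube_cond a b c"
    using key[OF fin gc z _ xS p] c8 by fastforce
  show "\<exists>f. bij_betw f S (Pow {0::nat, 1, 2}) \<and> (\<forall>x\<in>S. \<forall>y\<in>S. x dvd y \<longleftrightarrow> f x \<subseteq> f y)"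
    by (rule iso[OF fin gc c8 xS abc])
qed

end
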